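(* Let $\Gamma\neq\{e\}$ be a finite subgroup of $SL(2,\mathbf{C})$, $k\in\mathbf{C}$, $c$ a complex class function on $\Gamma\setminus\{e\}$. Let $M$ be an $H_{1,k,c}(\mathbf{\Gamma}_N)$-module such that the restriction of $M$ to $\mathbf{\Gamma}_N$ is irreducible. Then the generators $x_i$, $y_i$ act by zero on $M$ for every $i=1,\dots,N$.
   Context: Let $L$ be a $2$-dimensional complex vector space with symplectic form $\omega_L$ and symplectic basis $x,y$; $\Gamma\subset Sp(L)=SL(2,\mathbf{C})$ finite. Let $V=L^{\oplus N}$, with $x_i,y_i$ (and $u_i$ for $u\in L$) the copies in the $i$-th summand. $\mathbf{\Gamma}_N=S_N\ltimes\Gamma^N$ (with $S_N$ permuting the factors) acts naturally on $V$; $\gamma_i$ denotes $\gamma\in\Gamma$ placed in the $i$-th factor of $\Gamma^N$, $s_{ij}\in S_N$ the transposition. $H_{1,k,c}(\mathbf{\Gamma}_N)$ is the quotient of the smash product $\mathbf{\Gamma}_N\sharp TV$ by the relations: for each $i$, $[x_i,y_i]=1+\frac{k}{2}\sum_{j\neq i}\sum_{\gamma\in\Gamma}s_{ij}\gamma_i\gamma_j^{-1}+\sum_{\gamma\in\Gamma\setminus\{e\}}c_\gamma\gamma_i$; and for $u,v\in L$, $i\neq j$: $[u_i,v_j]=-\frac{k}{2}\sum_{\gamma\in\Gamma}\omega_L(\gamma u,v)s_{ij}\gamma_i\gamma_j^{-1}$. *)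

theory Defs
  imports "HOL-Analysis.Analysis" "HOL-Combinatorics.Permutations" "HOL-Combinatorics.Transposition"
begin

type_synonym mat2 = "complex^2^2"
type_synonym vec2 = "complex^2"

text \<open>Elements of L are column vectors w.r.t. the symplectic basis x = (1,0), y = (0,1);
  Gamma acts on L by matrices.  The symplectic form with omega(x,y) = 1.\<close>
definition omegaL :: "vec2 \<Rightarrow> vec2 \<Rightarrow> complex" where
  "omegaL u v = u$1 * v$2 - u$2 * v$1"

definition finite_subgroup_SL2 :: "mat2 set \<Rightarrow> bool" where
  "finite_subgroup_SL2 G \<longleftrightarrow> finite G \<and> G \<subseteq> {A. det A = 1} \<and> mat 1 \<in> G
     \<and> (\<forall>A\<in>G. \<forall>B\<in>G. A ** B \<in> G) \<and> (\<forall>A\<in>G. matrix_inv A \<in> G)"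

definition class_function :: "mat2 set \<Rightarrow> (mat2 \<Rightarrow> complex) \<Rightarrow> bool" where
  "class_function G c \<longleftrightarrow>
     (\<forall>h\<in>G. \<forall>g\<in>G - {mat 1}. c (h ** g ** matrix_inv h) = c g)"

text \<open>The wreath product S_N \<ltimes> Gamma^N, indices 0..N-1.  An element (sigma, gamma)
  sends u_i (u in L, i-th copy) to (gamma_i u)_{sigma i}.\<close>
definition wreath :: "mat2 set \<Rightarrow> nat \<Rightarrow> ((nat \<Rightarrow> nat) \<times> (nat \<Rightarrow> mat2)) set" where
  "wreath G N = {(\<sigma>, \<gamma>). \<sigma> permutes {..<N} \<and> (\<forall>i<N. \<gamma> i \<in> G) \<and> (\<forall>i\<ge>N. \<gamma> i = mat 1)}"

definition wmul :: "((nat \<Rightarrow> nat) \<times> (nat \<Rightarrow> mat2)) \<Rightarrow> ((nat \<Rightarrow> nat) \<times> (nat \<Rightarrow> mat2))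
     \<Rightarrow> ((nat \<Rightarrow> nat) \<times> (nat \<Rightarrow> mat2))" where
  "wmul g h = (fst g \<circ> fst h, \<lambda>i. snd g (fst h i) ** snd h i)"

definition wone :: "(nat \<Rightarrow> nat) \<times> (nat \<Rightarrow> mat2)" where
  "wone = (id, \<lambda>_. mat 1)"

definition gam_at :: "nat \<Rightarrow> mat2 \<Rightarrow> (nat \<Rightarrow> nat) \<times> (nat \<Rightarrow> mat2)" where
  "gam_at i g = (id, (\<lambda>_. mat 1)(i := g))"

definition sgg :: "nat \<Rightarrow> nat \<Rightarrow> mat2 \<Rightarrow> (nat \<Rightarrow> nat) \<times> (nat \<Rightarrow> mat2)" where
  "sgg i j g = (Transposition.transpose i j, ((\<lambda>_. mat 1)(i := g))(j := matrix_inv g))"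

definition actL :: "(complex \<Rightarrow> 'm::ab_group_add \<Rightarrow> 'm) \<Rightarrow> (nat \<Rightarrow> 'm \<Rightarrow> 'm) \<Rightarrow> (nat \<Rightarrow> 'm \<Rightarrow> 'm)
     \<Rightarrow> nat \<Rightarrow> vec2 \<Rightarrow> 'm \<Rightarrow> 'm" where
  "actL sm X Y i u m = sm (u$1) (X i m) + sm (u$2) (Y i m)"

definition is_H_module ::
  "mat2 set \<Rightarrow> nat \<Rightarrow> complex \<Rightarrow> (mat2 \<Rightarrow> complex) \<Rightarrow> (complex \<Rightarrow> 'm::ab_group_add \<Rightarrow> 'm)
   \<Rightarrow> ((nat \<Rightarrow> nat) \<times> (nat \<Rightarrow> mat2) \<Rightarrow> 'm \<Rightarrow> 'm) \<Rightarrow> (nat \<Rightarrow> 'm \<Rightarrow> 'm) \<Rightarrow> (nat \<Rightarrow> 'm \<Rightarrow> 'm) \<Rightarrow> bool"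
  where
  "is_H_module G N k c sm \<rho> X Y \<longleftrightarrow>
     vector_space sm
   \<comment> \<open>representation of Gamma_N\<close>
   \<and> (\<forall>g\<in>wreath G N. module_hom sm sm (\<rho> g))
   \<and> (\<forall>m. \<rho> wone m = m)
   \<and> (\<forall>g\<in>wreath G N. \<forall>h\<in>wreath G N. \<forall>m. \<rho> (wmul g h) m = \<rho> g (\<rho> h m))
   \<comment> \<open>action of V\<close>
   \<and> (\<forall>i<N. module_hom sm sm (X i) \<and> module_hom sm sm (Y i))
   \<comment> \<open>smash product relation  g u_i g^{-1} = (gamma_i u)_{sigma i}\<close>
   \<and> (\<forall>g\<in>wreath G N. \<forall>i<N. \<forall>u m.
        \<rho> g (actL sm X Y i u m) = actL sm X Y (fst g i) (snd g i *v u) (\<rho> g m))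
   \<comment> \<open>[x_i, y_i] relation\<close>
   \<and> (\<forall>i<N. \<forall>m. X i (Y i m) - Y i (X i m) =
        m + sm (k / 2) (\<Sum>j\<in>{..<N} - {i}. \<Sum>g\<in>G. \<rho> (sgg i j g) m)
          + (\<Sum>g\<in>G - {mat 1}. sm (c g) (\<rho> (gam_at i g) m)))
   \<comment> \<open>[u_i, v_j] relation for i \<noteq> j\<close>
   \<and> (\<forall>i<N. \<forall>j<N. i \<noteq> j \<longrightarrow> (\<forall>u v m.
        actL sm X Y i u (actL sm X Y j v m) - actL sm X Y j v (actL sm X Y i u m) =
        sm (- k / 2) (\<Sum>g\<in>G. sm (omegaL (g *v u) v) (\<rho> (sgg i j g) m))))"

definition restriction_irreducible ::
  "mat2 set \<Rightarrow> nat \<Rightarrow> (complex \<Rightarrow> 'm::ab_group_add \<Rightarrow> 'm)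
   \<Rightarrow> ((nat \<Rightarrow> nat) \<times> (nat \<Rightarrow> mat2) \<Rightarrow> 'm \<Rightarrow> 'm) \<Rightarrow> bool" where
  "restriction_irreducible G N sm \<rho> \<longleftrightarrow>
     (UNIV :: 'm set) \<noteq> {0} \<and>
     (\<forall>W. module.subspace sm W \<and> (\<forall>g\<in>wreath G N. \<rho> g ` W \<subseteq> W)
          \<longrightarrow> W = {0} \<or> W = UNIV)"

end

theory Submission
  imports Defs
begin


lemma m2eq: "(A::mat2) = B \<longleftrightarrow> A$1$1 = B$1$1 \<and> A$1$2 = B$1$2 \<and> A$2$1 = B$2$1 \<and> A$2$2 = B$2$2"
  by (auto simp: vec_eq_iff forall_2)

lemma mm[simp]: fixes A B :: mat2 shows
  "(A ** B)$1$1 = A$1$1*B$1$1 + A$1$2*B$2$1"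
  "(A ** B)$1$2 = A$1$1*B$1$2 + A$1$2*B$2$2"
  "(A ** B)$2$1 = A$2$1*B$1$1 + A$2$2*B$2$1"
  "(A ** B)$2$2 = A$2$1*B$1$2 + A$2$2*B$2$2"
  by (simp_all add: matrix_matrix_mult_def sum_2)

lemma mat_ent[simp]: "(mat a :: mat2)$1$1 = a" "(mat a :: mat2)$1$2 = 0" "(mat a :: mat2)$2$1 = 0" "(mat a :: mat2)$2$2 = a"
  by (simp_all add: mat_def)

lemma minus_ent[simp]: fixes A B :: mat2 shows "(A - B)$i$j = A$i$j - B$i$j" "(-A)$i$j = - A$i$j"
  by simp_all

definition adj2 :: "mat2 \<Rightarrow> mat2" where
  "adj2 A = (\<chi> i j. if i = 1 then (if j = 1 then A$2$2 else - A$1$2) else (if j = 1 then - A$2$1 else A$1$1))"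

lemma adj2_ent[simp]: "adj2 A $1$1 = A$2$2" "adj2 A $1$2 = - A$1$2" "adj2 A $2$1 = - A$2$1" "adj2 A $2$2 = A$1$1"
  by (simp_all add: adj2_def)

lemma inv2: assumes "det A = 1" shows "matrix_inv A = adj2 A"
proof -
  have d: "A$1$1 * A$2$2 - A$1$2 * A$2$1 = 1" using assms by (simp add: det_2)
  have h1: "A ** adj2 A = mat 1" "adj2 A ** A = mat 1"
    using d by (simp_all add: m2eq algebra_simps)
  have "A ** matrix_inv A = mat 1 \<and> matrix_inv A ** A = mat 1"
    unfolding matrix_inv_def by (rule someI[of _ "adj2 A"]) (use h1 in auto)
  hence "matrix_inv A = matrix_inv A ** (A ** adj2 A)" using h1 by simp
  also have "\<dots> = adj2 A" using \<open>A ** matrix_inv A = mat 1 \<and> matrix_inv A ** A = mat 1\<close>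
    by (simp add: matrix_mul_assoc)
  finally show ?thesis .
qed

definition nonsc :: "mat2 \<Rightarrow> bool" where
  "nonsc A \<longleftrightarrow> \<not> (A$1$2 = 0 \<and> A$2$1 = 0 \<and> A$1$1 = A$2$2)"

lemma solve: "(q::complex) \<noteq> 0 \<Longrightarrow> q * a = b * t \<Longrightarrow> a = b / q * t"
  by (simp add: field_simps)

lemma span2:
  assumes "nonsc y" "x ** y = y ** x"
  shows "\<exists>\<beta>. x$1$2 = \<beta> * y$1$2 \<and> x$2$1 = \<beta> * y$2$1 \<and> x$1$1 - x$2$2 = \<beta> * (y$1$1 - y$2$2)"
proof -
  have e: "x ** y = y ** x" by (rule assms(2))
  have e1: "y$1$2 * x$2$1 = x$1$2 * y$2$1"
    using arg_cong[OF e, of "\<lambda>M. M$1$1"] by (simp add: algebra_simps)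
  have e2: "y$1$2 * (x$1$1 - x$2$2) = x$1$2 * (y$1$1 - y$2$2)"
    using arg_cong[OF e, of "\<lambda>M. M$1$2"] by (simp add: algebra_simps)
  have e3: "y$2$1 * (x$1$1 - x$2$2) = x$2$1 * (y$1$1 - y$2$2)"
    using arg_cong[OF e, of "\<lambda>M. M$2$1"] by (simp add: algebra_simps)
  consider "y$1$2 \<noteq> 0" | "y$1$2 = 0" "y$2$1 \<noteq> 0" | "y$1$2 = 0" "y$2$1 = 0" "y$1$1 \<noteq> y$2$2"
    using assms(1) unfolding nonsc_def by blast
  then show ?thesis
  proof cases
    case 1
    have a: "x$1$2 = x$1$2 / y$1$2 * y$1$2" using 1 by simp
    have b: "x$2$1 = x$1$2 / y$1$2 * y$2$1" by (rule solve[OF 1 e1])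
    have c: "x$1$1 - x$2$2 = x$1$2 / y$1$2 * (y$1$1 - y$2$2)" by (rule solve[OF 1 e2])
    show ?thesis using a b c by blast
  next
    case 2
    have a: "x$1$2 = x$2$1 / y$2$1 * y$1$2" by (rule solve[OF 2(2)]) (use e1 in \<open>simp add: mult.commute\<close>)
    have b: "x$2$1 = x$2$1 / y$2$1 * y$2$1" using 2 by simp
    have c: "x$1$1 - x$2$2 = x$2$1 / y$2$1 * (y$1$1 - y$2$2)" by (rule solve[OF 2(2) e3])
    show ?thesis using a b c by blast
  next
    case 3
    have n: "y$1$1 - y$2$2 \<noteq> 0" using 3 by simp
    have a: "x$1$2 = (x$1$1 - x$2$2) / (y$1$1 - y$2$2) * y$1$2"
      by (rule solve[OF n]) (use e2 3 n in simp)
    have b: "x$2$1 = (x$1$1 - x$2$2) / (y$1$1 - y$2$2) * y$2$1"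
      by (rule solve[OF n]) (use e3 3 n in simp)
    have c: "x$1$1 - x$2$2 = (x$1$1 - x$2$2) / (y$1$1 - y$2$2) * (y$1$1 - y$2$2)" using n by simp
    show ?thesis using a b c by blast
  qed
qed

lemma comm_trans:
  assumes "nonsc y" "x ** y = y ** x" "z ** y = y ** z"
  shows "x ** z = z ** x"
proof -
  obtain b where b: "x$1$2 = b * y$1$2" "x$2$1 = b * y$2$1" "x$1$1 - x$2$2 = b * (y$1$1 - y$2$2)"
    using span2[OF assms(1,2)] by blast
  obtain c where c: "z$1$2 = c * y$1$2" "z$2$1 = c * y$2$1" "z$1$1 - z$2$2 = c * (y$1$1 - y$2$2)"
    using span2[OF assms(1,3)] by blast
  have x11: "x$1$1 = x$2$2 + b * (y$1$1 - y$2$2)" using b(3) by (simp add: algebra_simps)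
  have z11: "z$1$1 = z$2$2 + c * (y$1$1 - y$2$2)" using c(3) by (simp add: algebra_simps)
  show ?thesis unfolding m2eq mm x11 z11 b(1,2) c(1,2) by (simp add: algebra_simps)
qed

lemma adj2_mult: "adj2 (A ** B) = adj2 B ** adj2 A"
  by (simp add: m2eq algebra_simps)

lemma adj2_adj2[simp]: "adj2 (adj2 A) = A"
  by (simp add: m2eq)

lemma adj2_right: "det A = 1 \<Longrightarrow> A ** adj2 A = mat 1"
  by (simp add: m2eq det_2 algebra_simps)

lemma adj2_left: "det A = 1 \<Longrightarrow> adj2 A ** A = mat 1"
  by (simp add: m2eq det_2 algebra_simps)

lemma det_adj2: "det (adj2 A) = det A"
  by (simp add: det_2 algebra_simps)

definition tr2 :: "mat2 \<Rightarrow> complex" where "tr2 A = A$1$1 + A$2$2"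

lemma tr_conj: "det u = 1 \<Longrightarrow> tr2 (u ** b ** adj2 u) = tr2 b"
proof -
  assume d: "det u = 1"
  have "tr2 (u ** b ** adj2 u) = det u * tr2 b" unfolding tr2_def det_2 by simp algebra
  thus ?thesis using d by simp
qed

lemma M2:
  assumes "nonsc a" "b ** a = a ** b" "tr2 b = tr2 a" "det b = 1" "det a = 1" "(tr2 a)^2 \<noteq> 4"
  shows "b = a \<or> b = adj2 a"
proof -
  obtain \<beta> where bb: "b$1$2 = \<beta> * a$1$2" "b$2$1 = \<beta> * a$2$1" "b$1$1 - b$2$2 = \<beta> * (a$1$1 - a$2$2)"
    using span2[OF assms(1,2)] by blast
  have t: "b$1$1 + b$2$2 = a$1$1 + a$2$2" using assms(3) by (simp add: tr2_def)
  have "2 * b$1$1 = ((a$1$1 + a$2$2) + \<beta> * (a$1$1 - a$2$2))" using bb(3) t by algebra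
  hence b11: "b$1$1 = ((a$1$1 + a$2$2) + \<beta> * (a$1$1 - a$2$2)) / 2" by (simp add: field_simps)
  have "2 * b$2$2 = ((a$1$1 + a$2$2) - \<beta> * (a$1$1 - a$2$2))" using bb(3) t by algebra
  hence b22: "b$2$2 = ((a$1$1 + a$2$2) - \<beta> * (a$1$1 - a$2$2)) / 2" by (simp add: field_simps)
  have da: "a$1$1 * a$2$2 - a$1$2 * a$2$1 = 1" using assms(5) by (simp add: det_2)
  have db: "b$1$1 * b$2$2 - b$1$2 * b$2$1 = 1" using assms(4) by (simp add: det_2)
  have "(1 - \<beta>^2) * ((a$1$1 + a$2$2)^2 - 4) = 0"
    using db da unfolding b11 b22 bb(1,2) by (simp add: field_simps power2_eq_square)
  moreover have "(a$1$1 + a$2$2)^2 - 4 \<noteq> 0" using assms(6) by (simp add: tr2_def)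
  ultimately have "\<beta>^2 = 1" by simp
  hence "\<beta> = 1 \<or> \<beta> = -1" by (simp add: power2_eq_1_iff)
  thus ?thesis
  proof
    assume "\<beta> = 1" thus ?thesis using bb b11 b22 by (simp add: m2eq field_simps)
  next
    assume "\<beta> = -1" thus ?thesis using bb b11 b22 by (simp add: m2eq field_simps)
  qed
qed

lemma scalar_pm:
  assumes "\<not> nonsc g" "det g = 1" shows "g = mat 1 \<or> g = - mat 1"
proof -
  have "g$1$1 * g$1$1 = 1" using assms by (simp add: nonsc_def det_2)
  hence "g$1$1 = 1 \<or> g$1$1 = -1" by (metis power2_eq_1_iff power2_eq_square)
  thus ?thesis using assms(1) by (auto simp: m2eq nonsc_def)
qed

lemma sq_one:
  fixes g :: mat2
  assumes "g ** g = mat 1" "det g = 1" shows "g = mat 1 \<or> g = - mat 1"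
proof -
  have e: "g$1$1*g$1$1 + g$1$2*g$2$1 = 1" "g$1$1*g$1$2 + g$1$2*g$2$2 = 0"
      "g$2$1*g$1$1 + g$2$2*g$2$1 = 0" "g$2$1*g$1$2 + g$2$2*g$2$2 = 1"
    using assms(1) unfolding m2eq by simp_all
  have d: "g$1$1 * g$2$2 - g$1$2 * g$2$1 = 1" using assms(2) by (simp add: det_2)
  have t: "g$1$1 + g$2$2 \<noteq> 0"
  proof
    assume h: "g$1$1 + g$2$2 = 0"
    have "(2::complex) = 0" using e(1) d h by algebra
    thus False by simp
  qed
  have p1: "g$1$2 * (g$1$1 + g$2$2) = 0" using e(2) by algebra
  have p2: "g$2$1 * (g$1$1 + g$2$2) = 0" using e(3) by algebra
  have z: "g$1$2 = 0" "g$2$1 = 0" using p1 p2 t by simp_all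
  have "(g$1$1 - g$2$2) * (g$1$1 + g$2$2) = 0" using e(1,4) z by algebra
  hence "g$1$1 - g$2$2 = 0" using t by simp
  hence "g$1$1 = g$2$2" by simp
  hence "\<not> nonsc g" using z by (simp add: nonsc_def)
  thus ?thesis using scalar_pm assms(2) by blast
qed


fun pw :: "mat2 \<Rightarrow> nat \<Rightarrow> mat2" where
  "pw g 0 = mat 1"
| "pw g (Suc k) = g ** pw g k"

lemma pw_add: "pw g (a + b) = pw g a ** pw g b"
  by (induction a) (simp_all add: matrix_mul_assoc)

lemma pw_det: "det g = 1 \<Longrightarrow> det (pw g k) = 1"
  by (induction k) (simp_all add: det_mul det_I)

lemma unip_closed:
  assumes "det g = 1" "tr2 g = 2"
  shows "pw g k $1$1 = 1 + of_nat k * (g$1$1 - 1) \<and> pw g k $1$2 = of_nat k * g$1$2 \<and>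
         pw g k $2$1 = of_nat k * g$2$1 \<and> pw g k $2$2 = 1 + of_nat k * (g$2$2 - 1)"
proof (induction k)
  case 0 then show ?case by simp
next
  case (Suc k)
  have d: "g$1$1 * g$2$2 - g$1$2 * g$2$1 = 1" using assms(1) by (simp add: det_2)
  have t: "g$1$1 + g$2$2 = 2" using assms(2) by (simp add: tr2_def)
  show ?case using Suc d t by (simp add: algebra_simps) algebra
qed

lemma unip_trivial:
  assumes "det g = 1" "tr2 g = 2" "pw g k = mat 1" "k > 0"
  shows "g = mat 1"
proof -
  have c: "pw g k $1$1 = 1 + of_nat k * (g$1$1 - 1) \<and> pw g k $1$2 = of_nat k * g$1$2 \<and>
         pw g k $2$1 = of_nat k * g$2$1 \<and> pw g k $2$2 = 1 + of_nat k * (g$2$2 - 1)"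
    by (rule unip_closed[OF assms(1,2)])
  have kz: "(of_nat k :: complex) \<noteq> 0" using assms(4) by simp
  show ?thesis using c assms(3) kz unfolding m2eq by simp
qed

lemma negunip_closed:
  assumes "det g = 1" "tr2 g = -2"
  shows "pw g k $1$1 = (-1)^k * (1 - of_nat k * (g$1$1 + 1)) \<and> pw g k $1$2 = (-1)^k * (- of_nat k * g$1$2) \<and>
         pw g k $2$1 = (-1)^k * (- of_nat k * g$2$1) \<and> pw g k $2$2 = (-1)^k * (1 - of_nat k * (g$2$2 + 1))"
proof (induction k)
  case 0 then show ?case by simp
next
  case (Suc k)
  have d: "g$1$1 * g$2$2 - g$1$2 * g$2$1 = 1" using assms(1) by (simp add: det_2)
  have t: "g$1$1 + g$2$2 = -2" using assms(2) by (simp add: tr2_def)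
  obtain s where s: "s = (-1::complex)^k" by simp
  have ps: "(-1::complex)^(Suc k) = - s" using s by simp
  have e: "pw g k $1$1 = s * (1 - of_nat k * (g$1$1 + 1))" "pw g k $1$2 = s * (- of_nat k * g$1$2)"
     "pw g k $2$1 = s * (- of_nat k * g$2$1)" "pw g k $2$2 = s * (1 - of_nat k * (g$2$2 + 1))"
    using Suc s by auto
  show ?case unfolding pw.simps mm e ps of_nat_Suc using d t by algebra
qed

lemma negunip_trivial:
  assumes "det g = 1" "tr2 g = -2" "pw g k = mat 1" "k > 0"
  shows "g = - mat 1"
proof -
  have c: "pw g k $1$1 = (-1)^k * (1 - of_nat k * (g$1$1 + 1)) \<and> pw g k $1$2 = (-1)^k * (- of_nat k * g$1$2) \<and>
         pw g k $2$1 = (-1)^k * (- of_nat k * g$2$1) \<and> pw g k $2$2 = (-1)^k * (1 - of_nat k * (g$2$2 + 1))"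
    by (rule negunip_closed[OF assms(1,2)])
  have kz: "(of_nat k :: complex) \<noteq> 0" using assms(4) by simp
  have t: "g$1$1 + g$2$2 = -2" using assms(2) by (simp add: tr2_def)
  have s: "(-1::complex)^k \<noteq> 0" by simp
  have e1: "(-1)^k * (1 - of_nat k * (g$1$1 + 1)) = (1::complex)"
   and e2: "(-1)^k * (1 - of_nat k * (g$2$2 + 1)) = (1::complex)"
    using c assms(3) unfolding m2eq by simp_all
  have aux: "\<And>(s::complex) kk a b. s*(1 - kk*(a+1)) = 1 \<Longrightarrow> s*(1 - kk*(b+1)) = 1 \<Longrightarrow> a + b = -2 \<Longrightarrow> s*2 = 2"
    by algebra
  have "(-1::complex)^k * 2 = 2" using aux[OF e1 e2 t] .
  hence m: "(-1::complex)^k = 1" by simp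
  have "g$1$1 = -1" "g$2$2 = -1" using e1 e2 kz unfolding m by (simp_all add: eq_neg_iff_add_eq_0)
  moreover have "g$1$2 = 0" "g$2$1 = 0" using c assms(3) kz unfolding m2eq m by simp_all
  ultimately show ?thesis by (simp add: m2eq)
qed




lemma adjL: fixes X :: mat2 shows "det u = 1 \<Longrightarrow> adj2 u ** (u ** X) = X"
  by (simp add: matrix_mul_assoc adj2_left)
lemma adjR: fixes X :: mat2 shows "det u = 1 \<Longrightarrow> u ** (adj2 u ** X) = X"
  by (simp add: matrix_mul_assoc adj2_right)

context
  fixes G :: "mat2 set"
  assumes SG: "finite_subgroup_SL2 G"
begin

lemma finG: "finite G" using SG by (simp add: finite_subgroup_SL2_def)
lemma oneG: "mat 1 \<in> G" using SG by (simp add: finite_subgroup_SL2_def)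
lemma mulG: "a \<in> G \<Longrightarrow> b \<in> G \<Longrightarrow> a ** b \<in> G" using SG by (simp add: finite_subgroup_SL2_def)
lemma detG: "a \<in> G \<Longrightarrow> det a = 1" using SG by (auto simp add: finite_subgroup_SL2_def)
lemma invG: "a \<in> G \<Longrightarrow> matrix_inv a = adj2 a" using detG inv2 by blast
lemma adjG: "a \<in> G \<Longrightarrow> adj2 a \<in> G" using SG invG by (auto simp add: finite_subgroup_SL2_def)
lemma pwG: "a \<in> G \<Longrightarrow> pw a k \<in> G" by (induction k) (simp_all add: oneG mulG)

lemma orderG:
  assumes "a \<in> G" shows "\<exists>k>0. pw a k = mat 1"
proof -
  have "\<not> inj (pw a)"
  proof
    assume "inj (pw a)"
    moreover have "range (pw a) \<subseteq> G" using pwG assms by auto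
    ultimately have "finite (UNIV :: nat set)" using finG inj_on_finite by blast
    thus False by simp
  qed
  then obtain i j where ij: "i \<noteq> j" "pw a i = pw a j" unfolding inj_def by blast
  have "\<exists>i d. d > 0 \<and> pw a i = pw a (d + i)"
  proof (cases "i < j")
    case True thus ?thesis using ij by (intro exI[of _ i] exI[of _ "j - i"]) simp
  next
    case False thus ?thesis using ij by (intro exI[of _ j] exI[of _ "i - j"]) simp
  qed
  then obtain i d where d: "d > 0" "pw a i = pw a (d + i)" by blast
  have di: "det (pw a i) = 1" using pw_det detG assms by blast
  have "pw a d = pw a d ** (pw a i ** adj2 (pw a i))" using adj2_right[OF di] by simp
  also have "\<dots> = pw a (d + i) ** adj2 (pw a i)" by (simp add: pw_add matrix_mul_assoc)
  also have "\<dots> = mat 1" using d(2) adj2_right[OF di] by simp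
  finally show ?thesis using d(1) by blast
qed

lemma tr_ne2: "a \<in> G \<Longrightarrow> a \<noteq> mat 1 \<Longrightarrow> tr2 a \<noteq> 2"
  using orderG unip_trivial detG by blast
lemma tr_nem2: "a \<in> G \<Longrightarrow> a \<noteq> - mat 1 \<Longrightarrow> tr2 a \<noteq> -2"
  using orderG negunip_trivial detG by blast

end

context
  fixes G :: "mat2 set"
  assumes SG: "finite_subgroup_SL2 G" and nI: "- mat 1 \<notin> G"
begin

lemma nonscG: "a \<in> G \<Longrightarrow> a \<noteq> mat 1 \<Longrightarrow> nonsc a"
  using scalar_pm detG[OF SG] nI by blast

lemma sq4: assumes "a \<in> G" "a \<noteq> mat 1" shows "(tr2 a)^2 \<noteq> 4"
proof
  assume "(tr2 a)^2 = 4"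
  hence "(tr2 a - 2) * (tr2 a + 2) = 0" by (simp add: algebra_simps power2_eq_square)
  hence "tr2 a = 2 \<or> tr2 a = -2" by (auto simp: eq_neg_iff_add_eq_0)
  moreover have "a \<noteq> - mat 1" using assms nI by auto
  ultimately show False using tr_ne2[OF SG] tr_nem2[OF SG] assms by blast
qed

lemma L2:
  assumes b: "b \<in> G" "b \<noteq> mat 1" and u: "u \<in> G"
    and cm: "(u ** b ** adj2 u) ** b = b ** (u ** b ** adj2 u)"
  shows "u ** b = b ** u"
proof -
  note dtu = detG[OF SG u]
  have b'G: "u ** b ** adj2 u \<in> G" using mulG[OF SG] adjG[OF SG] b u by blast
  have "u ** b ** adj2 u = b \<or> u ** b ** adj2 u = adj2 b"
    by (rule M2[OF nonscG[OF b] cm tr_conj[OF dtu] detG[OF SG b'G] detG[OF SG b(1)] sq4[OF b]])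
  thus ?thesis
  proof
    assume h: "u ** b ** adj2 u = b"
    have "b ** u = u ** b ** adj2 u ** u" using h by simp
    also have "\<dots> = u ** b" by (simp add: matrix_mul_assoc[symmetric] adj2_left[OF dtu])
    finally show ?thesis by simp
  next
    assume h: "u ** b ** adj2 u = adj2 b"
    have h2: "u ** (adj2 b ** adj2 u) = b"
    proof -
      have "adj2 (u ** b ** adj2 u) = b" using h by simp
      thus ?thesis by (simp add: adj2_mult matrix_mul_assoc)
    qed
    have wb: "b ** (u ** u) = (u ** u) ** b"
    proof -
      have "b ** (u ** u) = u ** ((u ** b ** adj2 u) ** adj2 u) ** (u ** u)"
        using h2 h by (simp add: matrix_mul_assoc)
      also have "\<dots> = (u ** u) ** b"
        by (simp add: matrix_mul_assoc[symmetric] adjL[OF dtu] adjR[OF dtu] adj2_left[OF dtu])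
      finally show ?thesis .
    qed
    have wG: "u ** u \<in> G" using mulG[OF SG] u by blast
    show ?thesis
    proof (cases "u ** u = mat 1")
      case True
      hence "u = mat 1 \<or> u = - mat 1" using sq_one dtu by blast
      hence "u = mat 1" using nI u by blast
      thus ?thesis by simp
    next
      case False
      have ns: "nonsc (u ** u)" using nonscG wG False by blast
      show ?thesis
        by (rule comm_trans[OF ns], rule matrix_mul_assoc, rule wb)
    qed
  qed
qed

end



definition Cz :: "mat2 set \<Rightarrow> mat2 \<Rightarrow> mat2 set" where "Cz G g = {h\<in>G. h ** g = g ** h}"
definition Phi :: "mat2 \<times> mat2 \<Rightarrow> mat2" where "Phi p = fst p ** snd p ** adj2 (fst p)"
definition ImA :: "mat2 set \<Rightarrow> mat2 \<Rightarrow> mat2 set" where "ImA G g = Phi ` (G \<times> (Cz G g - {mat 1}))"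

lemma sumc: "(\<Sum>y\<in>(A::'a set). (c::nat)) = card A * c" by simp

lemmas RA = matrix_mul_assoc[symmetric]

context
  fixes G :: "mat2 set"
  assumes SG: "finite_subgroup_SL2 G" and nI: "- mat 1 \<notin> G"
begin

lemma fib:
  assumes g: "g \<in> G" "g \<noteq> mat 1" and h: "h \<in> G" and a: "a \<in> Cz G g - {mat 1}"
  shows "{p \<in> G \<times> (Cz G g - {mat 1}). Phi p = Phi (h, a)} = (\<lambda>u. (h ** u, a)) ` Cz G g"
proof
  note ng = nonscG[OF SG nI g]
  have aG: "a \<in> G" "a ** g = g ** a" "a \<noteq> mat 1" using a by (auto simp: Cz_def)
  have dh: "det h = 1" using detG[OF SG h] .
  show "(\<lambda>u. (h ** u, a)) ` Cz G g \<subseteq> {p \<in> G \<times> (Cz G g - {mat 1}). Phi p = Phi (h, a)}"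
  proof
    fix p assume "p \<in> (\<lambda>u. (h ** u, a)) ` Cz G g"
    then obtain u where u: "u \<in> G" "u ** g = g ** u" and p: "p = (h ** u, a)" by (auto simp: Cz_def)
    have du: "det u = 1" using detG[OF SG u(1)] .
    have ua: "u ** a = a ** u" using comm_trans[OF ng u(2) aG(2)] .
    have "Phi p = h ** ((u ** a) ** adj2 u) ** adj2 h" by (simp add: p Phi_def adj2_mult RA)
    also have "\<dots> = h ** a ** adj2 h" unfolding ua by (simp add: RA adj2_right[OF du])
    finally have "Phi p = Phi (h, a)" by (simp add: Phi_def)
    moreover have "h ** u \<in> G" using mulG[OF SG h u(1)] .
    ultimately show "p \<in> {p \<in> G \<times> (Cz G g - {mat 1}). Phi p = Phi (h, a)}" using p a by auto
  qed
  show "{p \<in> G \<times> (Cz G g - {mat 1}). Phi p = Phi (h, a)} \<subseteq> (\<lambda>u. (h ** u, a)) ` Cz G g"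
  proof
    fix p assume P: "p \<in> {p \<in> G \<times> (Cz G g - {mat 1}). Phi p = Phi (h, a)}"
    obtain k b where p: "p = (k, b)" by (cases p)
    from P have k: "k \<in> G" and b: "b \<in> G" "b ** g = g ** b" "b \<noteq> mat 1"
      and e: "k ** b ** adj2 k = h ** a ** adj2 h" by (auto simp: p Cz_def Phi_def)
    define u where "u = adj2 h ** k"
    have uG: "u \<in> G" unfolding u_def using mulG[OF SG adjG[OF SG h] k] .
    have dk: "det k = 1" using detG[OF SG k] .
    have adu: "adj2 u = adj2 k ** h" by (simp add: u_def adj2_mult)
    have "u ** b ** adj2 u = adj2 h ** (k ** b ** adj2 k) ** h" unfolding adu by (simp add: u_def RA)
    also have "\<dots> = a" unfolding e by (simp add: RA adjL[OF dh] adj2_left[OF dh])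
    finally have ua: "u ** b ** adj2 u = a" .
    have ab: "a ** b = b ** a" using comm_trans[OF ng aG(2) b(2)] .
    have ub: "u ** b = b ** u" by (rule L2[OF SG nI b(1) b(3) uG]) (simp add: ua ab)
    have du: "det u = 1" using detG[OF SG uG] .
    have "a = b" unfolding ua[symmetric] ub by (simp add: RA adj2_right[OF du])
    moreover have "u ** g = g ** u"
      using comm_trans[OF nonscG[OF SG nI b(1) b(3)] ub] b(2) by simp
    moreover have "k = h ** u" by (simp add: u_def RA adjR[OF dh])
    ultimately show "p \<in> (\<lambda>u. (h ** u, a)) ` Cz G g" using p uG by (auto simp: Cz_def)
  qed
qed

lemma card_Im:
  assumes g: "g \<in> G" "g \<noteq> mat 1"
  shows "card (ImA G g) * card (Cz G g) = card G * (card (Cz G g) - 1)"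
proof -
  let ?S = "G \<times> (Cz G g - {mat 1})"
  let ?f = "\<lambda>y. {p \<in> ?S. Phi p = y}"
  have fC: "finite (Cz G g)" using finG[OF SG] by (simp add: Cz_def)
  have oneC: "mat 1 \<in> Cz G g" using oneG[OF SG] by (simp add: Cz_def)
  have fS: "finite ?S" using finG[OF SG] fC by simp
  have cS: "card ?S = card G * (card (Cz G g) - 1)"
    by (simp add: card_cartesian_product oneC fC)
  have S: "?S = \<Union> (?f ` ImA G g)" unfolding ImA_def by blast
  have fI: "finite (ImA G g)" unfolding ImA_def using fS by (rule finite_imageI)
  have ff: "\<forall>y\<in>ImA G g. finite (?f y)" using fS by simp
  have dj: "\<forall>y\<in>ImA G g. \<forall>y'\<in>ImA G g. y \<noteq> y' \<longrightarrow> ?f y \<inter> ?f y' = {}" by blast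
  have "card ?S = card (\<Union> (?f ` ImA G g))" by (rule arg_cong[OF S])
  also have "\<dots> = (\<Sum>y\<in>ImA G g. card (?f y))"
    by (rule card_UN_disjoint[OF fI ff dj])
  also have "\<dots> = (\<Sum>y\<in>ImA G g. card (Cz G g))"
  proof (rule sum.cong[OF refl])
    fix y assume "y \<in> ImA G g"
    then obtain h a where h: "h \<in> G" and a: "a \<in> Cz G g - {mat 1}" and y: "y = Phi (h, a)"
      unfolding ImA_def by auto
    have dh: "det h = 1" using detG[OF SG h] .
    have inj: "inj_on (\<lambda>u. (h ** u, a)) (Cz G g)"
    proof
      fix u v :: mat2 assume "(h ** u, a) = (h ** v, a)"
      hence "adj2 h ** (h ** u) = adj2 h ** (h ** v)" by simp
      thus "u = v" by (metis adjL[OF dh])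
    qed
    show "card (?f y) = card (Cz G g)"
      unfolding y fib[OF g h a] using card_image[OF inj] .
  qed
  also have "\<dots> = card (ImA G g) * card (Cz G g)" by (rule sumc)
  finally have "card ?S = card (ImA G g) * card (Cz G g)" .
  thus ?thesis using cS by (rule trans[OF sym])
qed

lemma Im_sub: "ImA G g \<subseteq> G - {mat 1}"
proof
  fix y assume "y \<in> ImA G g"
  then obtain p where P: "p \<in> G \<times> (Cz G g - {mat 1})" "y = Phi p" unfolding ImA_def by auto
  obtain h a where p: "p = (h, a)" by (cases p)
  from P have h: "h \<in> G" and a: "a \<in> G" "a \<noteq> mat 1" and y: "y = h ** a ** adj2 h"
    by (auto simp: p Phi_def Cz_def)
  have dh: "det h = 1" using detG[OF SG h] .
  have "y \<in> G" using y mulG[OF SG] adjG[OF SG] h a by metis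
  moreover have "y \<noteq> mat 1"
  proof
    assume "y = mat 1"
    hence "adj2 h ** y ** h = mat 1" using adj2_left[OF dh] by simp
    moreover have "adj2 h ** y ** h = a" unfolding y by (simp add: RA adjL[OF dh] adj2_left[OF dh])
    ultimately show False using a by simp
  qed
  ultimately show "y \<in> G - {mat 1}" by simp
qed

lemma disj:
  assumes g0: "g0 \<in> G" "g0 \<noteq> mat 1" and g1: "g1 \<in> G" "g1 \<noteq> mat 1" "g1 \<notin> ImA G g0"
  shows "ImA G g0 \<inter> ImA G g1 = {}"
proof (rule ccontr)
  assume "ImA G g0 \<inter> ImA G g1 \<noteq> {}"
  then obtain p q where P: "p \<in> G \<times> (Cz G g0 - {mat 1})" "q \<in> G \<times> (Cz G g1 - {mat 1})" "Phi p = Phi q"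
    unfolding ImA_def by force
  obtain h a where p: "p = (h, a)" by (cases p)
  obtain k b where q: "q = (k, b)" by (cases q)
  from P have h: "h \<in> G" and a: "a \<in> G" "a ** g0 = g0 ** a" "a \<noteq> mat 1"
    and k: "k \<in> G" and b: "b \<in> G" "b ** g1 = g1 ** b" "b \<noteq> mat 1"
    and e: "h ** a ** adj2 h = k ** b ** adj2 k"
    by (auto simp: p q Phi_def Cz_def)
  define u where "u = adj2 k ** h"
  have uG: "u \<in> G" unfolding u_def using mulG[OF SG adjG[OF SG k] h] .
  have dk: "det k = 1" using detG[OF SG k] .
  have du: "det u = 1" using detG[OF SG uG] .
  have adu: "adj2 u = adj2 h ** k" by (simp add: u_def adj2_mult)
  have ub: "u ** a ** adj2 u = b"
  proof -
    have "u ** a ** adj2 u = adj2 k ** (h ** a ** adj2 h) ** k" unfolding adu by (simp add: u_def RA)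
    also have "\<dots> = b" unfolding e by (simp add: RA adjL[OF dk] adj2_left[OF dk])
    finally show ?thesis .
  qed
  define a' where "a' = adj2 u ** g1 ** u"
  have a'G: "a' \<in> G" unfolding a'_def using mulG[OF SG] adjG[OF SG] uG g1(1) by metis
  have a'1: "a' \<noteq> mat 1"
  proof
    assume "a' = mat 1"
    hence "u ** a' ** adj2 u = mat 1" using adj2_right[OF du] by simp
    moreover have "u ** a' ** adj2 u = g1" unfolding a'_def by (simp add: RA adjR[OF du] adj2_right[OF du])
    ultimately show False using g1 by simp
  qed
  have "a' ** a = a ** a'"
  proof -
    have "g1 ** (u ** a ** adj2 u) = (u ** a ** adj2 u) ** g1" using b(2) ub by simp
    hence "adj2 u ** (g1 ** (u ** a ** adj2 u)) ** u = adj2 u ** ((u ** a ** adj2 u) ** g1) ** u" by simp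
    thus ?thesis unfolding a'_def by (simp add: RA adjL[OF du] adj2_left[OF du])
  qed
  hence "a' ** g0 = g0 ** a'"
    using comm_trans[OF nonscG[OF SG nI a(1) a(3)] _ a(2)[symmetric]] by simp
  hence "a' \<in> Cz G g0 - {mat 1}" using a'G a'1 by (simp add: Cz_def)
  moreover have "Phi (u, a') = g1" unfolding Phi_def a'_def by (simp add: RA adjR[OF du] adj2_right[OF du])
  ultimately have "g1 \<in> ImA G g0" unfolding ImA_def using uG by force
  thus False using g1 by simp
qed

lemma card2: assumes "finite S" "x \<in> S" "y \<in> S" "x \<noteq> y" shows "card S \<ge> 2"
proof -
  have "card {x, y} = 2" using assms(4) by simp
  moreover have "card {x, y} \<le> card S" using assms by (intro card_mono) auto
  ultimately show ?thesis by simp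
qed

lemma arith1: fixes n a i :: nat assumes "i * a = n * (a - 1)" "a < n" "a \<ge> 2" shows "i < n - 1"
proof (rule ccontr)
  assume "\<not> i < n - 1"
  hence "(n - 1) * a \<le> i * a" by simp
  hence le: "(n - 1) * a \<le> n * (a - 1)" using assms(1) by simp
  have e1: "n * (a - 1) = n * a - n" by (simp add: diff_mult_distrib2)
  have e2: "(n - 1) * a = n * a - a" by (simp add: diff_mult_distrib)
  have na: "n * 1 \<le> n * a" using assms(3) by (intro mult_le_mono2) simp
  show False using le e1 e2 na assms(2) by linarith
qed

lemma arith2: fixes n c i :: nat assumes "i * c = n * (c - 1)" "c \<ge> 2" shows "2 * i \<ge> n"
proof -
  have e1: "n * (c - 1) = n * c - n" by (simp add: diff_mult_distrib2)
  have na: "n * 2 \<le> n * c" using assms(2) by (intro mult_le_mono2) simp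
  have "n * c \<le> 2 * (n * (c - 1))" using e1 na by linarith
  hence "n * c \<le> (2 * i) * c" using assms(1) by (simp add: mult.assoc)
  thus ?thesis using assms(2) by simp
qed

lemma abelian: "a \<in> G \<Longrightarrow> b \<in> G \<Longrightarrow> a ** b = b ** a"
proof (rule ccontr)
  assume a: "a \<in> G" and b: "b \<in> G" and nc: "a ** b \<noteq> b ** a"
  have a1: "a \<noteq> mat 1" using nc by auto
  let ?n = "card G"
  have fG: "finite G" using finG[OF SG] .
  have bn: "b \<notin> Cz G a" using nc by (auto simp: Cz_def)
  have CA: "Cz G a \<subset> G" unfolding psubset_eq using b bn by (auto simp: Cz_def)
  have cA: "card (Cz G a) < ?n" using psubset_card_mono[OF fG CA] .
  have fCa: "finite (Cz G a)" using fG by (simp add: Cz_def)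
  have cA2: "card (Cz G a) \<ge> 2"
    by (rule card2[OF fCa, of "mat 1" a]) (use a a1 oneG[OF SG] in \<open>auto simp: Cz_def\<close>)
  have eA: "card (ImA G a) * card (Cz G a) = ?n * (card (Cz G a) - 1)" using card_Im[OF a a1] .
  have cG1: "card (G - {mat 1}) = ?n - 1" using oneG[OF SG] fG by simp
  have lt: "card (ImA G a) < ?n - 1" using arith1[OF eA cA cA2] .
  have "\<not> G - {mat 1} \<subseteq> ImA G a"
  proof
    assume "G - {mat 1} \<subseteq> ImA G a"
    moreover have "finite (ImA G a)" using Im_sub[of a] fG finite_subset by blast
    ultimately have "card (G - {mat 1}) \<le> card (ImA G a)" by (rule card_mono[rotated])
    thus False using lt cG1 by simp
  qed
  then obtain g1 where g1: "g1 \<in> G" "g1 \<noteq> mat 1" "g1 \<notin> ImA G a" using Im_sub[of a] by blast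
  have fCb: "finite (Cz G g1)" using fG by (simp add: Cz_def)
  have cB2: "card (Cz G g1) \<ge> 2"
    by (rule card2[OF fCb, of "mat 1" g1]) (use g1 oneG[OF SG] in \<open>auto simp: Cz_def\<close>)
  have eB: "card (ImA G g1) * card (Cz G g1) = ?n * (card (Cz G g1) - 1)" using card_Im[OF g1(1,2)] .
  have hA: "2 * card (ImA G a) \<ge> ?n" using arith2[OF eA cA2] .
  have hB: "2 * card (ImA G g1) \<ge> ?n" using arith2[OF eB cB2] .
  have fIa: "finite (ImA G a)" using Im_sub[of a] fG finite_subset by blast
  have fIb: "finite (ImA G g1)" using Im_sub[of g1] fG finite_subset by blast
  have "card (ImA G a \<union> ImA G g1) = card (ImA G a) + card (ImA G g1)"
    by (rule card_Un_disjoint[OF fIa fIb disj[OF a a1 g1]])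
  moreover have "card (ImA G a \<union> ImA G g1) \<le> card (G - {mat 1})"
    by (rule card_mono) (use fG Im_sub[of a] Im_sub[of g1] in auto)
  ultimately have "card (ImA G a) + card (ImA G g1) \<le> ?n - 1" using cG1 by simp
  moreover have "?n > 0" using fG oneG[OF SG] card_gt_0_iff by blast
  ultimately show False using hA hB by linarith
qed

end



lemma prim_root:
  assumes n: "n > 0"
  shows "\<exists>\<omega>::complex. \<omega>^n = 1 \<and> (\<forall>k. 0 < k \<longrightarrow> k < n \<longrightarrow> \<omega>^k \<noteq> 1)"
proof (intro exI conjI allI impI)
  let ?w = "cis (2 * pi / real n)"
  have "real n * (2 * pi / real n) = 2 * pi" using n by simp
  thus "?w ^ n = 1" by (simp only: Complex.DeMoivre) simp
  fix k :: nat assume k: "0 < k" "k < n"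
  show "?w ^ k \<noteq> 1"
  proof
    assume "?w ^ k = 1"
    hence "cis (real k * (2 * pi / real n)) = 1" by (simp add: Complex.DeMoivre)
    hence "cos (real k * (2 * pi / real n)) = 1" by (metis complex.sel(1) cis.sel(1) one_complex.sel(1))
    then obtain m :: int where m: "real k * (2 * pi / real n) = real_of_int m * 2 * pi"
      using cos_one_2pi_int[of "real k * (2 * pi / real n)"] by auto
    hence "real k = m * real n" using n by (simp add: field_simps)
    hence "int k = m * int n" by (metis of_int_eq_iff of_int_mult of_int_of_nat_eq)
    moreover have "int k > 0" "int k < int n" using k by auto
    ultimately show False
    proof (cases "m \<le> 0")
      case True
      hence "m * int n \<le> 0" by (simp add: mult_nonpos_nonneg)
      thus False using \<open>int k = m * int n\<close> \<open>int k > 0\<close> by linarith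
    next
      case False
      hence "1 * int n \<le> m * int n" by (intro mult_right_mono) auto
      thus False using \<open>int k = m * int n\<close> \<open>int k < int n\<close> by linarith
    qed
  qed
qed

lemma eigen:
  fixes sm :: "complex \<Rightarrow> 'm::ab_group_add \<Rightarrow> 'm" and T :: "'m \<Rightarrow> 'm" and m0 :: 'm
  assumes VS: "vector_space sm" and lin: "module_hom sm sm T" and n: "n > 0"
    and per: "\<And>m. (T ^^ n) m = m" and nz: "m0 \<noteq> 0"
  shows "\<exists>\<mu> m. m \<noteq> 0 \<and> T m = sm \<mu> m \<and> \<mu> \<noteq> 0"
proof -
  interpret V: vector_space sm by (rule VS)
  obtain \<omega> :: complex where w: "\<omega>^n = 1" "\<And>k. 0 < k \<Longrightarrow> k < n \<Longrightarrow> \<omega>^k \<noteq> 1" using prim_root[OF n] by blast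
  have w0: "\<omega> \<noteq> 0" using w(1) n by (metis power_0_left not_gr0 zero_neq_one)
  define P where "P \<mu> = (\<Sum>k<n. sm (inverse \<mu> ^ k) ((T ^^ k) m0))" for \<mu>
  have eig: "T (P \<mu>) = sm \<mu> (P \<mu>)" if mu: "\<mu>^n = 1" for \<mu>
  proof -
    have m0: "\<mu> \<noteq> 0" using mu n by (metis power_0_left not_gr0 zero_neq_one)
    define g where "g k = sm (\<mu> * inverse \<mu> ^ k) ((T ^^ k) m0)" for k
    have "T (P \<mu>) = (\<Sum>k<n. sm (inverse \<mu> ^ k) ((T ^^ Suc k) m0))"
      unfolding P_def by (simp add: module_hom.sum[OF lin] module_hom.scale[OF lin])
    also have "\<dots> = (\<Sum>k<n. g (Suc k))"
      unfolding g_def using m0 by (intro sum.cong refl) (simp add: field_simps)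
    also have "\<dots> = (\<Sum>k<n. g k) + g n - g 0"
      using sum.lessThan_Suc_shift[of g n] sum.lessThan_Suc[of g n] by (simp add: algebra_simps)
    also have "g n = g 0" unfolding g_def using mu per by (simp add: power_inverse)
    also have "(\<Sum>k<n. g k) = sm \<mu> (P \<mu>)"
      unfolding g_def P_def by (simp add: V.scale_sum_right)
    finally show ?thesis by simp
  qed
  have tot: "(\<Sum>j<n. P (\<omega>^j)) = sm (of_nat n) m0"
  proof -
    have "(\<Sum>j<n. P (\<omega>^j)) = (\<Sum>k<n. sm (\<Sum>j<n. (inverse (\<omega>^k))^j) ((T ^^ k) m0))"
      unfolding P_def
      by (subst sum.swap) (simp add: V.scale_sum_left power_inverse power_mult[symmetric] mult.commute)
    also have "\<dots> = (\<Sum>k<n. if k = 0 then sm (of_nat n) m0 else 0)"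
    proof (intro sum.cong refl)
      fix k assume k: "k \<in> {..<n}"
      show "sm (\<Sum>j<n. (inverse (\<omega>^k))^j) ((T ^^ k) m0) = (if k = 0 then sm (of_nat n) m0 else 0)"
      proof (cases "k = 0")
        case True thus ?thesis by simp
      next
        case False
        have "inverse (\<omega>^k) \<noteq> 1" using w(2)[of k] False k by auto
        moreover have "(inverse (\<omega>^k))^n = 1"
          using w(1) by (metis power_inverse power_mult mult.commute power_one inverse_1)
        ultimately have "(\<Sum>j<n. (inverse (\<omega>^k))^j) = 0" by (simp add: sum_gp_strict)
        thus ?thesis using False by simp
      qed
    qed
    also have "\<dots> = sm (of_nat n) m0" using n by (simp add: sum.delta')
    finally show ?thesis .
  qed
  have "sm (of_nat n) m0 \<noteq> 0" using n nz by simp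
  then obtain j where "P (\<omega>^j) \<noteq> 0" using tot by (metis (no_types, lifting) sum.neutral)
  moreover have "T (P (\<omega>^j)) = sm (\<omega>^j) (P (\<omega>^j))"
    by (rule eig) (metis w(1) power_mult power_one mult.commute)
  moreover have "\<omega>^j \<noteq> 0" using w0 by simp
  ultimately show ?thesis by blast
qed




lemma central:
  assumes SG: "finite_subgroup_SL2 G" and ne: "G \<noteq> {mat 1}"
  shows "\<exists>c\<in>G. c \<noteq> mat 1 \<and> (\<forall>h\<in>G. c ** h = h ** c)"
proof (cases "- mat 1 \<in> G")
  case True
  have "- mat 1 \<noteq> (mat 1 :: mat2)" by (simp add: m2eq)
  moreover have "\<forall>h\<in>G. (- mat 1) ** h = h ** (- mat 1 :: mat2)" by (simp add: m2eq)
  ultimately show ?thesis using True by blast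
next
  case False
  obtain c where c: "c \<in> G" "c \<noteq> mat 1" using ne oneG[OF SG] by blast
  thus ?thesis using abelian[OF SG False] by blast
qed

lemma mv2: fixes A :: mat2 shows "(A *v u)$1 = A$1$1 * u$1 + A$1$2 * u$2" "(A *v u)$2 = A$2$1 * u$1 + A$2$2 * u$2"
  by (simp_all add: matrix_vector_mult_def sum_2)

theorem theorem4p1:
  fixes G :: "mat2 set" and N :: nat and k :: complex and c :: "mat2 \<Rightarrow> complex"
    and sm :: "complex \<Rightarrow> 'm::ab_group_add \<Rightarrow> 'm"
    and \<rho> :: "(nat \<Rightarrow> nat) \<times> (nat \<Rightarrow> mat2) \<Rightarrow> 'm \<Rightarrow> 'm"
    and X Y :: "nat \<Rightarrow> 'm \<Rightarrow> 'm"
  assumes "finite_subgroup_SL2 G" and "G \<noteq> {mat 1}"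
    and "class_function G c"
    and "is_H_module G N k c sm \<rho> X Y"
    and "restriction_irreducible G N sm \<rho>"
  shows "\<forall>i<N. \<forall>m. X i m = 0 \<and> Y i m = 0"
proof -
  note SG = assms(1)
  note H = assms(4)[unfolded is_H_module_def]
  have VS: "vector_space sm" using H by (rule conjunct1)
  note H2 = H[THEN conjunct2, THEN conjunct1]
  note H3 = H[THEN conjunct2, THEN conjunct2, THEN conjunct1]
  note H4 = H[THEN conjunct2, THEN conjunct2, THEN conjunct2, THEN conjunct1]
  note H5 = H[THEN conjunct2, THEN conjunct2, THEN conjunct2, THEN conjunct2, THEN conjunct1]
  note H6 = H[THEN conjunct2, THEN conjunct2, THEN conjunct2, THEN conjunct2, THEN conjunct2, THEN conjunct1]
  have homr: "\<And>g. g \<in> wreath G N \<Longrightarrow> module_hom sm sm (\<rho> g)" using H2 by (rule bspec)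
  have rone: "\<And>m. \<rho> wone m = m" using H3 by (rule spec)
  have rmul: "\<And>g h m. g \<in> wreath G N \<Longrightarrow> h \<in> wreath G N \<Longrightarrow> \<rho> (wmul g h) m = \<rho> g (\<rho> h m)"
    using H4 by blast
  have homXY: "\<And>i. i < N \<Longrightarrow> module_hom sm sm (X i) \<and> module_hom sm sm (Y i)"
    using H5 by blast
  have smash: "\<And>g i u m. g \<in> wreath G N \<Longrightarrow> i < N \<Longrightarrow>
        \<rho> g (actL sm X Y i u m) = actL sm X Y (fst g i) (snd g i *v u) (\<rho> g m)"
    using H6 by blast
  note R = assms(5)[unfolded restriction_irreducible_def]
  have nt: "(UNIV :: 'm set) \<noteq> {0}" using R by (rule conjunct1)
  have irr: "\<And>W. module.subspace sm W \<Longrightarrow> (\<forall>g\<in>wreath G N. \<rho> g ` W \<subseteq> W) \<Longrightarrow> W = {0} \<or> W = UNIV"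
    using R[THEN conjunct2] by blast
  interpret V: vector_space sm by (rule VS)
  obtain cc where cc: "cc \<in> G" "cc \<noteq> mat 1" "\<And>h. h \<in> G \<Longrightarrow> cc ** h = h ** cc"
    using central[OF SG assms(2)] by blast
  have trc: "tr2 cc \<noteq> 2" using tr_ne2[OF SG cc(1,2)] .
  obtain n where n: "n > 0" "pw cc n = mat 1" using orderG[OF SG cc(1)] by blast
  define zk where "zk j = (id :: nat \<Rightarrow> nat, \<lambda>i. if i < N then pw cc j else mat 1)" for j
  define z where "z = (id :: nat \<Rightarrow> nat, \<lambda>i. if i < N then cc else (mat 1 :: mat2))"
  have zkW: "zk j \<in> wreath G N" for j
    using pwG[OF SG cc(1)] by (simp add: zk_def wreath_def)
  have zW: "z \<in> wreath G N" using cc(1) by (simp add: z_def wreath_def)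
  have zk0: "zk 0 = wone" by (simp add: zk_def wone_def fun_eq_iff)
  have zkS: "wmul z (zk j) = zk (Suc j)" for j
    by (simp add: zk_def z_def wmul_def fun_eq_iff)
  have pwr: "\<rho> (zk j) m = (\<rho> z ^^ j) m" for j m
  proof (induction j arbitrary: m)
    case 0 thus ?case by (simp add: zk0 rone)
  next
    case (Suc j)
    have "\<rho> (zk (Suc j)) m = \<rho> z (\<rho> (zk j) m)" unfolding zkS[symmetric] using rmul zW zkW by blast
    thus ?case using Suc by simp
  qed
  have per: "(\<rho> z ^^ n) m = m" for m
  proof -
    have "zk n = wone" using n(2) by (simp add: zk_def wone_def fun_eq_iff)
    thus ?thesis using pwr[of n m] rone by simp
  qed
  have comm: "\<rho> h (\<rho> z m) = \<rho> z (\<rho> h m)" if h: "h \<in> wreath G N" for h m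
  proof -
    obtain \<sigma> \<gamma> where hh: "h = (\<sigma>, \<gamma>)" by (cases h)
    have p: "\<sigma> permutes {..<N}" and g: "\<And>i. i < N \<Longrightarrow> \<gamma> i \<in> G" and g1: "\<And>i. i \<ge> N \<Longrightarrow> \<gamma> i = mat 1"
      using h by (auto simp: hh wreath_def)
    have "wmul h z = wmul z h"
    proof -
      have "\<gamma> i ** (if i < N then cc else mat 1) = (if \<sigma> i < N then cc else mat 1) ** \<gamma> i" for i
      proof (cases "i < N")
        case True
        hence "\<sigma> i < N" using permutes_in_image[OF p, of i] by simp
        thus ?thesis using True cc(3)[OF g[OF True]] by simp
      next
        case False
        hence "\<sigma> i = i" using permutes_not_in[OF p, of i] by simp
        thus ?thesis using False g1[of i] by simp
      qed
      thus ?thesis by (simp add: hh z_def wmul_def fun_eq_iff)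
    qed
    thus ?thesis using rmul[OF h zW, of m] rmul[OF zW h, of m] by simp
  qed
  have linz: "module_hom sm sm (\<rho> z)" using homr[OF zW] .
  obtain m0 :: 'm where m0: "m0 \<noteq> 0" using nt by blast
  obtain \<mu> m1 where em: "m1 \<noteq> 0" "\<rho> z m1 = sm \<mu> m1" and mu0: "\<mu> \<noteq> 0"
    using eigen[OF VS linz n(1) per m0] by blast
  define W where "W = {m. \<rho> z m = sm \<mu> m}"
  have subW: "module.subspace sm W"
    unfolding W_def module.subspace_def[OF V.module_axioms]
    by (simp add: module_hom.add[OF linz] module_hom.scale[OF linz] V.scale_right_distrib
        module_hom.zero[OF linz] V.scale_left_commute)
  have stW: "\<forall>g\<in>wreath G N. \<rho> g ` W \<subseteq> W"
  proof (intro ballI subsetI)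
    fix g x assume g: "g \<in> wreath G N" and x: "x \<in> \<rho> g ` W"
    then obtain m where m: "m \<in> W" "x = \<rho> g m" by blast
    have "\<rho> z x = \<rho> g (\<rho> z m)" using comm[OF g] m(2) by simp
    also have "\<dots> = sm \<mu> x" using m module_hom.scale[OF homr[OF g]] by (simp add: W_def)
    finally show "x \<in> W" by (simp add: W_def)
  qed
  have "W \<noteq> {0}" using em by (auto simp: W_def)
  hence WU: "W = UNIV" using irr[OF subW stW] by blast
  have zs: "\<rho> z m = sm \<mu> m" for m using WU by (auto simp: W_def)
  show ?thesis
  proof (intro allI impI)
    fix i m assume i: "i < N"
    have hX: "module_hom sm sm (X i)" and hY: "module_hom sm sm (Y i)" using homXY[OF i] by auto
    have key: "actL sm X Y i u m = actL sm X Y i (cc *v u) m" for u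
    proof -
      have s1: "\<rho> z (actL sm X Y i u m) = actL sm X Y i (cc *v u) (\<rho> z m)"
        using smash[OF zW i, of u m] i by (simp add: z_def)
      have "sm \<mu> (actL sm X Y i u m) = actL sm X Y i (cc *v u) (sm \<mu> m)"
        using s1 by (simp only: zs)
      also have "\<dots> = sm \<mu> (actL sm X Y i (cc *v u) m)"
        by (simp add: actL_def module_hom.scale[OF hX] module_hom.scale[OF hY]
            V.scale_right_distrib mult.commute)
      finally show ?thesis using mu0 by simp
    qed
    define e1 :: vec2 where "e1 = (\<chi> j. if j = 1 then 1 else 0)"
    define e2 :: vec2 where "e2 = (\<chi> j. if j = 1 then 0 else 1)"
    have k1: "X i m = sm (cc$1$1) (X i m) + sm (cc$2$1) (Y i m)"
      using key[of e1] by (simp add: actL_def mv2 e1_def)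
    have k2: "Y i m = sm (cc$1$2) (X i m) + sm (cc$2$2) (Y i m)"
      using key[of e2] by (simp add: actL_def mv2 e2_def)
    define a where "a = cc$1$1 - 1"
    define b where "b = cc$2$1"
    define c' where "c' = cc$1$2"
    define d where "d = cc$2$2 - 1"
    have q1: "sm a (X i m) + sm b (Y i m) = 0"
      using k1 unfolding a_def b_def by (simp add: V.scale_left_diff_distrib algebra_simps)
    have q2: "sm c' (X i m) + sm d (Y i m) = 0"
      using k2 unfolding c'_def d_def by (simp add: V.scale_left_diff_distrib algebra_simps)
    have dc: "det cc = 1" using detG[OF SG cc(1)] .
    have D: "a * d - b * c' \<noteq> 0"
    proof -
      have "a * d - b * c' = 2 - tr2 cc" using dc unfolding a_def b_def c'_def d_def tr2_def det_2
        by (simp add: algebra_simps)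
      thus ?thesis using trc by simp
    qed
    have "sm (a * d - b * c') (X i m) = sm d (sm a (X i m) + sm b (Y i m)) - sm b (sm c' (X i m) + sm d (Y i m))"
      by (simp add: V.scale_right_distrib V.scale_left_diff_distrib algebra_simps)
    hence "sm (a * d - b * c') (X i m) = 0" using q1 q2 by simp
    hence X0: "X i m = 0" using D by simp
    have "sm (a * d - b * c') (Y i m) = sm a (sm c' (X i m) + sm d (Y i m)) - sm c' (sm a (X i m) + sm b (Y i m))"
      by (simp add: V.scale_right_distrib V.scale_left_diff_distrib algebra_simps)
    hence "sm (a * d - b * c') (Y i m) = 0" using q1 q2 by simp
    hence "Y i m = 0" using D by simp
    thus "X i m = 0 \<and> Y i m = 0" using X0 by simp
  qed
qed


end
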